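(* Let $G$ be a finite simple graph on $[d]$. Then the Hilbert polynomial of $R[G]/K_G$ is the constant $2^d$; that is, $H(R[G]/K_G,k)=2^d$ for all sufficiently large $k$.
   Context: A stable set of $G$ is a subset of $[d]$ with no edge of $G$ (including $\emptyset$ and singletons); $S(G)$ is the set of stable sets; $R[G]=\mathbb{K}[x_S : S\in S(G)]$ over a field $\mathbb{K}$, all variables of degree $1$. $J_G$ is the ideal generated by all $x_{S_1}x_{S_2}-x_{S_3}x_{S_4}$ with $S_i\in S(G)$, $S_1\cap S_2=S_3\cap S_4=\emptyset$, $S_1\cup S_2=S_3\cup S_4$; $M_G=\langle x_Sx_T : S,T\in S(G),\ S\cap T\neq\emptyset\rangle$; $K_G=J_G+M_G$. $H(R[G]/K_G,k)=\dim_{\mathbb{K}}$ of the degree-$k$ part of $R[G]/K_G$; the Hilbert polynomial is the unique polynomial $P\in\mathbb{Q}[k]$ with $H(R[G]/K_G,k)=P(k)$ for all large $k$. *)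

theory Defs
  imports Complex_Main "HOL-Library.Poly_Mapping"
begin

definition simple_graph :: "nat \<Rightarrow> nat set set \<Rightarrow> bool" where
  "simple_graph d E \<longleftrightarrow> (\<forall>e\<in>E. e \<subseteq> {1..d} \<and> card e = 2)"

definition stable_sets :: "nat \<Rightarrow> nat set set \<Rightarrow> nat set set" where
  "stable_sets d E = {S. S \<subseteq> {1..d} \<and> (\<forall>e\<in>E. \<not> e \<subseteq> S)}"

text \<open>Monomials are finitely supported exponent vectors indexed by sets of vertices;
  polynomials with coefficients in 'k are finitely supported functions on monomials
  (with the convolution product of HOL-Library.Poly_Mapping).\<close>
type_synonym monom = "nat set \<Rightarrow>\<^sub>0 nat"
type_synonym 'k mpoly = "monom \<Rightarrow>\<^sub>0 'k"

definition var :: "nat set \<Rightarrow> 'k::comm_ring_1 mpoly" where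
  "var S = Poly_Mapping.single (Poly_Mapping.single S 1) 1"

definition monom_deg :: "monom \<Rightarrow> nat" where
  "monom_deg m = (\<Sum>S\<in>Poly_Mapping.keys m. Poly_Mapping.lookup m S)"

definition pscale :: "'k::field \<Rightarrow> 'k mpoly \<Rightarrow> 'k mpoly" where
  "pscale c p = Poly_Mapping.map (\<lambda>a. c * a) p"

definition RG :: "nat \<Rightarrow> nat set set \<Rightarrow> ('k::field) mpoly set" where
  "RG d E = {p. \<forall>m\<in>Poly_Mapping.keys p. Poly_Mapping.keys m \<subseteq> stable_sets d E}"

definition RG_deg :: "nat \<Rightarrow> nat set set \<Rightarrow> nat \<Rightarrow> ('k::field) mpoly set" where
  "RG_deg d E k = {p \<in> RG d E. \<forall>m\<in>Poly_Mapping.keys p. monom_deg m = k}"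

definition J_gens :: "nat \<Rightarrow> nat set set \<Rightarrow> ('k::field) mpoly set" where
  "J_gens d E = {var S1 * var S2 - var S3 * var S4 | S1 S2 S3 S4.
      S1 \<in> stable_sets d E \<and> S2 \<in> stable_sets d E \<and> S3 \<in> stable_sets d E \<and> S4 \<in> stable_sets d E \<and>
      S1 \<inter> S2 = {} \<and> S3 \<inter> S4 = {} \<and> S1 \<union> S2 = S3 \<union> S4}"

definition M_gens :: "nat \<Rightarrow> nat set set \<Rightarrow> ('k::field) mpoly set" where
  "M_gens d E = {var S * var T | S T.
      S \<in> stable_sets d E \<and> T \<in> stable_sets d E \<and> S \<inter> T \<noteq> {}}"

definition ideal_gen_in :: "('k::field) mpoly set \<Rightarrow> 'k mpoly set \<Rightarrow> 'k mpoly set" where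
  "ideal_gen_in R B = {(\<Sum>g\<in>F. r g * g) | F r. finite F \<and> F \<subseteq> B \<and> (\<forall>g\<in>F. r g \<in> R)}"

definition K_G :: "nat \<Rightarrow> nat set set \<Rightarrow> ('k::field) mpoly set" where
  "K_G d E = ideal_gen_in (RG d E) (J_gens d E \<union> M_gens d E)"

text \<open>Hilbert function: dim_K (R[G]/K_G)_k = dim_K R[G]_k - dim_K (K_G \<inter> R[G]_k).
  (Both spaces are finite-dimensional; K_G is homogeneous.)  The type argument fixes
  the coefficient field K.\<close>
definition hilbert_fn :: "'k::field itself \<Rightarrow> nat \<Rightarrow> nat set set \<Rightarrow> nat \<Rightarrow> nat" where
  "hilbert_fn _ d E k =
     vector_space.dim (pscale :: 'k \<Rightarrow> _) (RG_deg d E k :: 'k mpoly set)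
     - vector_space.dim (pscale :: 'k \<Rightarrow> _) (K_G d E \<inter> RG_deg d E k :: 'k mpoly set)"

end

theory Submission
  imports Defs
begin

lemma pscale_eq: "pscale c p = Poly_Mapping.single 0 c * p"
  unfolding pscale_def by (metis mult_map_scale_conv_mult)

interpretation pv: vector_space "pscale :: 'k::field \<Rightarrow> 'k mpoly \<Rightarrow> 'k mpoly"
  by unfold_locales
    (simp_all add: pscale_eq distrib_left distrib_right single_add mult.assoc[symmetric] mult_single)

lemma lookup_pscale[simp]: "Poly_Mapping.lookup (pscale c p) m = c * Poly_Mapping.lookup p m"
  unfolding pscale_def by (simp add: Poly_Mapping.map.rep_eq when_def)

definition L :: "(nat set \<Rightarrow> nat) \<Rightarrow> monom \<Rightarrow> nat" where
  "L f m = (\<Sum>S\<in>Poly_Mapping.keys m. Poly_Mapping.lookup m S * f S)"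

lemma L_superset: "finite A \<Longrightarrow> Poly_Mapping.keys m \<subseteq> A \<Longrightarrow>
   L f m = (\<Sum>S\<in>A. Poly_Mapping.lookup m S * f S)"
  unfolding L_def by (rule sum.mono_neutral_left) (auto simp: in_keys_iff)

lemma L_add: "L f (a + b) = L f a + L f b"
proof -
  let ?A = "Poly_Mapping.keys a \<union> Poly_Mapping.keys b"
  have "L f (a+b) = (\<Sum>S\<in>?A. Poly_Mapping.lookup (a+b) S * f S)"
    by (rule L_superset) (auto simp: keys_add)
  also have "\<dots> = (\<Sum>S\<in>?A. Poly_Mapping.lookup a S * f S) + (\<Sum>S\<in>?A. Poly_Mapping.lookup b S * f S)"
    by (simp add: lookup_add distrib_right sum.distrib)
  also have "\<dots> = L f a + L f b"
    using L_superset[of ?A a f] L_superset[of ?A b f] by simp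
  finally show ?thesis .
qed

lemma L_single[simp]: "L f (Poly_Mapping.single S n) = n * f S"
  unfolding L_def by (cases "n = 0") auto

lemma L_zero[simp]: "L f 0 = 0"
  unfolding L_def by simp

lemma L_sum: "L f (sum g A) = (\<Sum>a\<in>A. L f (g a))"
  by (induction A rule: infinite_finite_induct) (auto simp: L_add)

lemma monom_deg_L: "monom_deg m = L (\<lambda>_. 1) m"
  unfolding monom_deg_def L_def by simp

definition w :: "monom \<Rightarrow> nat \<Rightarrow> nat" where
  "w m i = L (\<lambda>S. if i \<in> S then 1 else 0) m"

definition ind :: "nat set \<Rightarrow> nat \<Rightarrow> nat" where
  "ind U i = (if i \<in> U then 1 else 0)"

lemma w_add: "w (a + b) = (\<lambda>i. w a i + w b i)"
  unfolding w_def by (simp add: L_add)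

lemma w_single: "w (Poly_Mapping.single S n) i = (if i \<in> S then n else 0)"
  unfolding w_def by simp

definition mono :: "monom \<Rightarrow> 'k::field mpoly" where
  "mono m = Poly_Mapping.single m 1"

definition phi :: "nat set \<Rightarrow> 'k::field mpoly \<Rightarrow> 'k" where
  "phi U p = (\<Sum>m\<in>Poly_Mapping.keys p. if w m = ind U then Poly_Mapping.lookup p m else 0)"

lemma phi_superset: "finite A \<Longrightarrow> Poly_Mapping.keys p \<subseteq> A \<Longrightarrow>
   phi U p = (\<Sum>m\<in>A. if w m = ind U then Poly_Mapping.lookup p m else 0)"
  unfolding phi_def by (rule sum.mono_neutral_left) (auto simp: in_keys_iff)

lemma phi_add: "phi U (p + q) = phi U p + phi U q"
proof -
  let ?A = "Poly_Mapping.keys p \<union> Poly_Mapping.keys q"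
  have "phi U (p+q) = (\<Sum>m\<in>?A. if w m = ind U then Poly_Mapping.lookup (p+q) m else 0)"
    by (rule phi_superset) (auto simp: keys_add)
  also have "\<dots> = (\<Sum>m\<in>?A. if w m = ind U then Poly_Mapping.lookup p m else 0)
      + (\<Sum>m\<in>?A. if w m = ind U then Poly_Mapping.lookup q m else 0)"
    by (simp add: lookup_add sum.distrib[symmetric] if_distrib cong: if_cong)
  also have "\<dots> = phi U p + phi U q"
    using phi_superset[of ?A p U] phi_superset[of ?A q U] by simp
  finally show ?thesis .
qed

lemma phi_zero[simp]: "phi U 0 = 0"
  unfolding phi_def by simp

lemma phi_uminus: "phi U (- p) = - phi U p"
  unfolding phi_def by (simp add: sum_negf[symmetric] if_distrib cong: if_cong)

lemma phi_diff: "phi U (p - q) = phi U p - phi U q"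
  using phi_add[of U p "-q"] phi_uminus[of U q] by simp

lemma phi_pscale: "phi U (pscale c p) = c * phi U p"
proof -
  have "phi U (pscale c p) = (\<Sum>m\<in>Poly_Mapping.keys p. if w m = ind U then Poly_Mapping.lookup (pscale c p) m else 0)"
    by (rule phi_superset) (auto simp: in_keys_iff)
  then show ?thesis unfolding phi_def by (simp add: sum_distrib_left if_distrib cong: if_cong)
qed

lemma phi_sum: "phi U (sum g A) = (\<Sum>a\<in>A. phi U (g a))"
  by (induction A rule: infinite_finite_induct) (auto simp: phi_add)

lemma phi_single: "phi U (Poly_Mapping.single m c) = (if w m = ind U then c else 0)"
  unfolding phi_def by (cases "c = 0") auto

lemma poly_expand: "p = (\<Sum>m\<in>Poly_Mapping.keys p. Poly_Mapping.single m (Poly_Mapping.lookup p m))"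
proof (rule poly_mapping_eqI)
  fix x
  have "(\<Sum>m\<in>Poly_Mapping.keys p. Poly_Mapping.lookup (Poly_Mapping.single m (Poly_Mapping.lookup p m)) x)
      = (\<Sum>m\<in>Poly_Mapping.keys p. if m = x then Poly_Mapping.lookup p x else 0)"
    by (rule sum.cong) (auto simp: lookup_single when_def)
  also have "\<dots> = Poly_Mapping.lookup p x"
    by (simp add: in_keys_iff)
  finally show "Poly_Mapping.lookup p x = Poly_Mapping.lookup (\<Sum>m\<in>Poly_Mapping.keys p. Poly_Mapping.single m (Poly_Mapping.lookup p m)) x"
    by (simp add: lookup_sum)
qed

lemma phi_mult_mono: "phi U (r * mono a) = (\<Sum>n\<in>Poly_Mapping.keys r. if w (n + a) = ind U then Poly_Mapping.lookup r n else 0)"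
proof -
  have "r * mono a = (\<Sum>n\<in>Poly_Mapping.keys r. Poly_Mapping.single n (Poly_Mapping.lookup r n)) * mono a"
    by (subst poly_expand[of r]) simp
  also have "\<dots> = (\<Sum>n\<in>Poly_Mapping.keys r. Poly_Mapping.single (n + a) (Poly_Mapping.lookup r n))"
    by (simp add: sum_distrib_right mono_def mult_single)
  finally show ?thesis by (simp add: phi_sum phi_single)
qed

lemma phi_J: "w a = w b \<Longrightarrow> phi U (r * (mono a - mono b)) = 0"
  by (simp add: right_diff_distrib phi_diff phi_mult_mono w_add)

lemma phi_M: assumes "w a i \<ge> 2" shows "phi U (r * mono a) = 0"
proof -
  have "w (n + a) \<noteq> ind U" for n
  proof
    assume "w (n + a) = ind U"
    then have "w n i + w a i = ind U i" by (metis w_add)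
    with assms show False by (simp add: ind_def split: if_splits)
  qed
  then show ?thesis by (simp add: phi_mult_mono)
qed

lemma var_mult: "var S * var T = mono (Poly_Mapping.single S 1 + Poly_Mapping.single T 1)"
  unfolding var_def mono_def by (simp add: mult_single)

lemma w_pair_disj: "S \<inter> T = {} \<Longrightarrow> w (Poly_Mapping.single S 1 + Poly_Mapping.single T 1) = ind (S \<union> T)"
  by (auto simp: w_add w_single ind_def fun_eq_iff)

lemma phi_K: assumes "p \<in> K_G d E" shows "phi U p = 0"
proof -
  from assms obtain F r where p: "p = (\<Sum>g\<in>F. r g * g)" and F: "F \<subseteq> J_gens d E \<union> M_gens d E"
    unfolding K_G_def ideal_gen_in_def by blast
  have "phi U (r g * g) = 0" if "g \<in> F" for g
  proof -
    from that F have "g \<in> J_gens d E \<or> g \<in> M_gens d E" by blast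
    then show ?thesis
    proof
      assume "g \<in> J_gens d E"
      then obtain S1 S2 S3 S4 where g: "g = var S1 * var S2 - var S3 * var S4"
        and h: "S1 \<inter> S2 = {}" "S3 \<inter> S4 = {}" "S1 \<union> S2 = S3 \<union> S4"
        unfolding J_gens_def by blast
      show ?thesis unfolding g var_mult
        by (rule phi_J) (metis w_pair_disj h)
    next
      assume "g \<in> M_gens d E"
      then obtain S T where g: "g = var S * var T" and h: "S \<inter> T \<noteq> {}"
        unfolding M_gens_def by blast
      then obtain i where "i \<in> S" "i \<in> T" by blast
      then have "w (Poly_Mapping.single S 1 + Poly_Mapping.single T 1) i \<ge> 2"
        by (simp add: w_add w_single)
      then show ?thesis unfolding g var_mult by (rule phi_M)
    qed
  qed
  then show ?thesis by (simp add: p phi_sum)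
qed

lemma phi_span_zero: assumes "\<forall>x\<in>S. phi U x = 0" "x \<in> pv.span S" shows "phi U x = 0"
  using assms(2)
proof (induction rule: pv.span_induct_alt)
  case base then show ?case by simp
next
  case (step c x y) then show ?case using assms(1) by (simp add: phi_add phi_pscale)
qed

lemma st_sub: "S \<in> stable_sets d E \<Longrightarrow> S \<subseteq> {1..d}"
  unfolding stable_sets_def by blast

lemma st_finite_set: "S \<in> stable_sets d E \<Longrightarrow> finite S"
  by (meson finite_atLeastAtMost finite_subset st_sub)

lemma st_finite: "finite (stable_sets d E)"
proof (rule finite_subset[of _ "Pow {1..d}"])
  show "stable_sets d E \<subseteq> Pow {1..d}" unfolding stable_sets_def by blast
qed simp

lemma st_subset: "S \<in> stable_sets d E \<Longrightarrow> T \<subseteq> S \<Longrightarrow> T \<in> stable_sets d E"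
  unfolding stable_sets_def by blast

lemma st_single: assumes "simple_graph d E" "i \<in> {1..d}" shows "{i} \<in> stable_sets d E"
proof -
  have "\<not> e \<subseteq> {i}" if "e \<in> E" for e
  proof
    assume "e \<subseteq> {i}"
    then have "card e \<le> 1" using card_mono[of "{i}" e] by simp
    with assms that show False unfolding simple_graph_def by force
  qed
  with assms show ?thesis unfolding stable_sets_def by auto
qed

lemma st_empty: assumes "simple_graph d E" shows "{} \<in> stable_sets d E"
  using assms unfolding stable_sets_def simple_graph_def by force

lemma RG_deg_I: "(\<And>m. m \<in> Poly_Mapping.keys p \<Longrightarrow> Poly_Mapping.keys m \<subseteq> stable_sets d E \<and> monom_deg m = k)
   \<Longrightarrow> p \<in> RG_deg d E k"
  by (auto simp: RG_deg_def RG_def)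

lemma keys_mono[simp]: "Poly_Mapping.keys (mono m :: 'k::field mpoly) = {m}"
  unfolding mono_def by simp

lemma sum_w: assumes "Poly_Mapping.keys m \<subseteq> stable_sets d E"
  shows "(\<Sum>i\<in>{1..d}. w m i) = L card m"
proof -
  have "(\<Sum>i\<in>{1..d}. w m i) = (\<Sum>i\<in>{1..d}. \<Sum>S\<in>Poly_Mapping.keys m. Poly_Mapping.lookup m S * (if i \<in> S then 1 else 0))"
    unfolding w_def L_def by simp
  also have "\<dots> = (\<Sum>S\<in>Poly_Mapping.keys m. \<Sum>i\<in>{1..d}. Poly_Mapping.lookup m S * (if i \<in> S then 1 else 0))"
    by (rule sum.swap)
  also have "\<dots> = (\<Sum>S\<in>Poly_Mapping.keys m. Poly_Mapping.lookup m S * card S)"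
  proof (rule sum.cong)
    fix S assume "S \<in> Poly_Mapping.keys m"
    then have "S \<subseteq> {1..d}" using assms st_sub by blast
    then have "{1..d} \<inter> S = S" by blast
    then show "(\<Sum>i\<in>{1..d}. Poly_Mapping.lookup m S * (if i \<in> S then 1 else 0)) = Poly_Mapping.lookup m S * card S"
      by (simp add: sum_distrib_left[symmetric] sum.If_cases)
  qed simp
  finally show ?thesis unfolding L_def .
qed

lemma sum_ind: "U \<subseteq> {1..d} \<Longrightarrow> (\<Sum>i\<in>{1..d}. ind U i) = card U"
  unfolding ind_def by (simp add: sum.If_cases Int_absorb1)

definition cU :: "nat \<Rightarrow> nat set \<Rightarrow> monom" where
  "cU k U = Poly_Mapping.single {} (k - card U) + (\<Sum>j\<in>U. Poly_Mapping.single {j} 1)"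

lemma w_cU: "finite U \<Longrightarrow> w (cU k U) = ind U"
  unfolding cU_def w_def
  by (auto simp: L_add L_sum fun_eq_iff ind_def sum.If_cases)

lemma deg_cU: "finite U \<Longrightarrow> card U \<le> k \<Longrightarrow> monom_deg (cU k U) = k"
  unfolding cU_def monom_deg_L by (simp add: L_add L_sum)

lemma lookup_cU: "Poly_Mapping.lookup (cU k U) S = (if S = {} then k - card U else 0) + (\<Sum>j\<in>U. if {j} = S then 1 else 0)"
proof -
  have 1: "Poly_Mapping.lookup (Poly_Mapping.single {} (k - card U)) S = (if S = {} then k - card U else 0)"
    by (simp add: lookup_single when_def eq_commute)
  have 2: "Poly_Mapping.lookup (\<Sum>j\<in>U. Poly_Mapping.single {j} (1::nat)) S = (\<Sum>j\<in>U. if {j} = S then 1 else 0)"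
    unfolding lookup_sum by (rule sum.cong) (simp_all add: lookup_single when_def)
  show ?thesis unfolding cU_def lookup_add 1 2 ..
qed

lemma keys_cU: assumes "simple_graph d E" "U \<subseteq> {1..d}"
  shows "Poly_Mapping.keys (cU k U) \<subseteq> stable_sets d E"
proof
  fix x assume x: "x \<in> Poly_Mapping.keys (cU k U)"
  have "x = {} \<or> (\<exists>j\<in>U. x = {j})"
  proof (rule ccontr)
    assume "\<not> ?thesis"
    then have h1: "x \<noteq> {}" and h2: "\<And>j. j \<in> U \<Longrightarrow> ({j} = x) = False" by auto
    have "(\<Sum>j\<in>U. if {j} = x then 1 else 0) = (0::nat)"
      by (rule sum.neutral) (simp add: h2)
    then have "Poly_Mapping.lookup (cU k U) x = 0" unfolding lookup_cU using h1 by simp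
    with x show False by (simp add: in_keys_iff)
  qed
  then show "x \<in> stable_sets d E" using assms st_single st_empty by blast
qed

lemma small_set:
  fixes S :: "'a set"
  assumes f: "finite S" and c: "card S \<le> 1"
  shows "S = {} \<or> (\<exists>j. S = {j})"
proof (cases "S = {}")
  case False
  from False obtain j where j: "j \<in> S" by blast
  have "\<forall>a\<in>S. \<forall>b\<in>S. a = b" using c card_le_Suc0_iff_eq[OF f] by simp
  then have "S = {j}" using j by blast
  then show ?thesis by blast
qed simp

lemma base_eq:
  assumes st: "Poly_Mapping.keys m \<subseteq> stable_sets d E" and deg: "monom_deg m = k"
    and wm: "w m = ind U" and U: "U \<subseteq> {1..d}" and small: "\<forall>S\<in>Poly_Mapping.keys m. card S \<le> 1"
  shows "m = cU k U"
proof -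
  have fin: "finite S" if "S \<in> Poly_Mapping.keys m" for S
    using that st st_finite_set by blast
  have sl: "Poly_Mapping.lookup m {j} = ind U j" for j
  proof -
    have "ind U j = w m j" using wm by simp
    also have "\<dots> = (\<Sum>S\<in>Poly_Mapping.keys m. Poly_Mapping.lookup m S * (if j \<in> S then 1 else 0))"
      unfolding w_def L_def by simp
    also have "\<dots> = (\<Sum>S\<in>Poly_Mapping.keys m. if S = {j} then Poly_Mapping.lookup m S else 0)"
    proof (rule sum.cong)
      fix S assume S: "S \<in> Poly_Mapping.keys m"
      have "j \<in> S \<longleftrightarrow> S = {j}"
        using small_set[OF fin[OF S]] small S by auto
      then show "Poly_Mapping.lookup m S * (if j \<in> S then 1 else 0) = (if S = {j} then Poly_Mapping.lookup m S else 0)"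
        by simp
    qed simp
    also have "\<dots> = Poly_Mapping.lookup m {j}"
      by (simp add: sum.delta' in_keys_iff)
    finally show ?thesis by simp
  qed
  have "k = (\<Sum>S\<in>Poly_Mapping.keys m. Poly_Mapping.lookup m S)"
    using deg unfolding monom_deg_def by simp
  also have "\<dots> = (\<Sum>S\<in>Poly_Mapping.keys m. Poly_Mapping.lookup m S * card S + (if S = {} then Poly_Mapping.lookup m S else 0))"
  proof (rule sum.cong)
    fix S assume S: "S \<in> Poly_Mapping.keys m"
    show "Poly_Mapping.lookup m S = Poly_Mapping.lookup m S * card S + (if S = {} then Poly_Mapping.lookup m S else 0)"
      using small_set[OF fin[OF S]] small S by auto
  qed simp
  also have "\<dots> = L card m + Poly_Mapping.lookup m {}"
    by (simp add: sum.distrib L_def sum.delta' in_keys_iff)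
  also have "L card m = card U"
    using sum_w[OF st] sum_ind[OF U] wm by simp
  finally have k: "k = card U + Poly_Mapping.lookup m {}" .
  have finU: "finite U" using U finite_subset by blast
  show ?thesis
  proof (rule poly_mapping_eqI)
    fix S :: "nat set"
    consider "S = {}" | j where "S = {j}" | "S \<noteq> {}" "\<forall>j. S \<noteq> {j}" by blast
    then show "Poly_Mapping.lookup m S = Poly_Mapping.lookup (cU k U) S"
    proof cases
      case 1
      then show ?thesis using k by (simp add: lookup_cU)
    next
      case 2
      have "(\<Sum>j'\<in>U. if {j'} = {j} then 1 else 0) = (\<Sum>j'\<in>U. if j' = j then 1 else (0::nat))"
        by (rule sum.cong) auto
      also have "\<dots> = ind U j" using finU by (simp add: ind_def)
      finally show ?thesis using 2 sl by (simp add: lookup_cU)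
    next
      case 3
      then have "S \<notin> Poly_Mapping.keys m" using small_set fin small by blast
      moreover have "(\<Sum>j\<in>U. if {j} = S then 1 else 0) = (0::nat)"
        by (rule sum.neutral) (use 3 in auto)
      ultimately show ?thesis using 3 by (simp add: lookup_cU in_keys_iff)
    qed
  qed
qed

lemma empty_pos:
  assumes "d \<le> k" and st: "Poly_Mapping.keys m \<subseteq> stable_sets d E" and deg: "monom_deg m = k"
    and wm: "w m = ind U" and U: "U \<subseteq> {1..d}" and S: "S \<in> Poly_Mapping.keys m" "card S \<ge> 2"
  shows "Poly_Mapping.lookup m {} \<ge> 1"
proof (rule ccontr)
  assume "\<not> ?thesis"
  then have "{} \<notin> Poly_Mapping.keys m" by (simp add: in_keys_iff)
  then have ne: "T \<noteq> {}" if "T \<in> Poly_Mapping.keys m" for T using that by blast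
  have fin: "finite T" if "T \<in> Poly_Mapping.keys m" for T
    using that st st_finite_set by blast
  have "k = (\<Sum>T\<in>Poly_Mapping.keys m. Poly_Mapping.lookup m T * 1)"
    using deg unfolding monom_deg_def by simp
  also have "\<dots> < (\<Sum>T\<in>Poly_Mapping.keys m. Poly_Mapping.lookup m T * card T)"
  proof (rule sum_strict_mono_ex1)
    show "\<forall>T\<in>Poly_Mapping.keys m. Poly_Mapping.lookup m T * 1 \<le> Poly_Mapping.lookup m T * card T"
    proof
      fix T assume T: "T \<in> Poly_Mapping.keys m"
      then have "card T \<ge> 1" using ne fin by (simp add: Suc_leI card_gt_0_iff)
      then show "Poly_Mapping.lookup m T * 1 \<le> Poly_Mapping.lookup m T * card T" by simp
    qed
    show "\<exists>T\<in>Poly_Mapping.keys m. Poly_Mapping.lookup m T * 1 < Poly_Mapping.lookup m T * card T"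
      using S by (intro bexI[of _ S]) (auto simp: in_keys_iff)
  qed simp
  also have "\<dots> = card U"
    using sum_w[OF st] sum_ind[OF U] wm unfolding L_def by simp
  also have "\<dots> \<le> d" using card_mono[OF _ U] by simp
  finally show False using \<open>d \<le> k\<close> by simp
qed

lemma mono_add: "mono a * mono b = (mono (a + b) :: 'k::field mpoly)"
  unfolding mono_def by (simp add: mult_single)

lemma move:
  assumes G: "simple_graph d E" and st: "Poly_Mapping.keys m \<subseteq> stable_sets d E" and deg: "monom_deg m = k"
    and wm: "w m = ind U" and S: "S \<in> Poly_Mapping.keys m" "card S \<ge> 2"
    and e: "Poly_Mapping.lookup m {} \<ge> 1"
  shows "\<exists>m'. Poly_Mapping.keys m' \<subseteq> stable_sets d E \<and> monom_deg m' = k \<and> w m' = ind U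
     \<and> Poly_Mapping.lookup m' {} < Poly_Mapping.lookup m {}
     \<and> (mono m - mono m' :: 'k::field mpoly) \<in> K_G d E \<inter> RG_deg d E k"
proof -
  have Sst: "S \<in> stable_sets d E" using S st by blast
  have finS: "finite S" using Sst st_finite_set by blast
  have Sne: "S \<noteq> {}" using S by auto
  then obtain i where i: "i \<in> S" by blast
  have "card (S - {i}) \<ge> 1" using S(2) i finS by simp
  then have Sine: "S - {i} \<noteq> {}" by (metis card.empty not_one_le_zero)
  have Si: "S - {i} \<in> stable_sets d E" using Sst st_subset by blast
  have ist: "{i} \<in> stable_sets d E" using st_single[OF G] st_sub[OF Sst] i by blast
  have est: "{} \<in> stable_sets d E" using st_empty[OF G] .
  define a where "a = m - Poly_Mapping.single {} 1 - Poly_Mapping.single S 1"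
  have lS: "Poly_Mapping.lookup m S \<ge> 1" using S by (simp add: in_keys_iff)
  have ma: "m = a + (Poly_Mapping.single {} 1 + Poly_Mapping.single S 1)"
  proof (rule poly_mapping_eqI)
    fix T show "Poly_Mapping.lookup m T = Poly_Mapping.lookup (a + (Poly_Mapping.single {} 1 + Poly_Mapping.single S 1)) T"
      using e lS Sne unfolding a_def by (auto simp: lookup_add lookup_minus lookup_single when_def)
  qed
  have keysa: "Poly_Mapping.keys a \<subseteq> Poly_Mapping.keys m"
    unfolding a_def by (auto simp: in_keys_iff lookup_minus)
  define m' where "m' = a + (Poly_Mapping.single (S - {i}) 1 + Poly_Mapping.single {i} 1)"
  have st': "Poly_Mapping.keys m' \<subseteq> stable_sets d E"
  proof -
    have "Poly_Mapping.keys m' \<subseteq> Poly_Mapping.keys a \<union> (Poly_Mapping.keys (Poly_Mapping.single (S - {i}) (1::nat)) \<union> Poly_Mapping.keys (Poly_Mapping.single {i} (1::nat)))"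
      unfolding m'_def by (rule order_trans[OF keys_add]) (intro Un_mono order_refl keys_add)
    then show ?thesis using keysa st Si ist by auto
  qed
  have deg': "monom_deg m' = k"
    using deg unfolding m'_def monom_deg_L by (subst (asm) ma) (simp add: L_add)
  have "w (Poly_Mapping.single (S - {i}) 1 + Poly_Mapping.single {i} 1) = ind ((S - {i}) \<union> {i})"
    by (rule w_pair_disj) blast
  moreover have "w (Poly_Mapping.single {} 1 + Poly_Mapping.single S 1) = ind ({} \<union> S)"
    by (rule w_pair_disj) blast
  moreover have "(S - {i}) \<union> {i} = {} \<union> S" using i by blast
  ultimately have "w m' = w m"
    unfolding m'_def by (subst ma) (simp add: w_add)
  with wm have w': "w m' = ind U" by simp
  have "Poly_Mapping.lookup m' {} = Poly_Mapping.lookup a {}"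
    unfolding m'_def using Sine by (simp add: lookup_add lookup_single when_def)
  also have "\<dots> < Poly_Mapping.lookup m {}"
    using e Sne unfolding a_def by (simp add: lookup_minus lookup_single when_def)
  finally have lt: "Poly_Mapping.lookup m' {} < Poly_Mapping.lookup m {}" .
  define g :: "'k mpoly" where "g = var {} * var S - var (S - {i}) * var {i}"
  have gJ: "g \<in> J_gens d E"
    unfolding g_def J_gens_def using est Sst Si ist i by blast
  have diff: "(mono m - mono m' :: 'k mpoly) = mono a * g"
    unfolding g_def var_mult right_diff_distrib mono_add m'_def by (subst ma) simp
  have aRG: "(mono a :: 'k mpoly) \<in> RG d E"
    unfolding RG_def using keysa st by simp
  have "mono a * g \<in> K_G d E"
    unfolding K_G_def ideal_gen_in_def
    by (rule CollectI, rule exI[of _ "{g}"], rule exI[of _ "\<lambda>_. mono a"]) (use gJ aRG in auto)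
  moreover have "(mono m - mono m' :: 'k mpoly) \<in> RG_deg d E k"
  proof (rule RG_deg_I)
    fix n assume "n \<in> Poly_Mapping.keys (mono m - mono m' :: 'k mpoly)"
    then have "n = m \<or> n = m'" using keys_diff[of "mono m :: 'k mpoly" "mono m'"] by auto
    then show "Poly_Mapping.keys n \<subseteq> stable_sets d E \<and> monom_deg n = k"
      using st deg st' deg' by auto
  qed
  ultimately show ?thesis using st' deg' w' lt diff by auto
qed

lemma reduce:
  assumes G: "simple_graph d E" and dk: "d \<le> k"
  shows "Poly_Mapping.keys m \<subseteq> stable_sets d E \<Longrightarrow> monom_deg m = k \<Longrightarrow> w m = ind U \<Longrightarrow> U \<subseteq> {1..d} \<Longrightarrow>
    (mono m - mono (cU k U) :: 'k::field mpoly) \<in> pv.span (K_G d E \<inter> RG_deg d E k)"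
proof (induction "Poly_Mapping.lookup m {}" arbitrary: m rule: less_induct)
  case less
  show ?case
  proof (cases "\<forall>S\<in>Poly_Mapping.keys m. card S \<le> 1")
    case True
    then have "m = cU k U" using base_eq less.prems by blast
    then show ?thesis by (simp add: pv.span_zero)
  next
    case False
    then obtain S where S: "S \<in> Poly_Mapping.keys m" "card S \<ge> 2" by force
    have e: "Poly_Mapping.lookup m {} \<ge> 1" using empty_pos[OF dk less.prems(1-4) S] .
    obtain m' where m': "Poly_Mapping.keys m' \<subseteq> stable_sets d E" "monom_deg m' = k" "w m' = ind U"
      "Poly_Mapping.lookup m' {} < Poly_Mapping.lookup m {}"
      "(mono m - mono m' :: 'k::field mpoly) \<in> K_G d E \<inter> RG_deg d E k"
      using move[OF G less.prems(1-3) S e] by blast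
    have A: "(mono m' - mono (cU k U) :: 'k mpoly) \<in> pv.span (K_G d E \<inter> RG_deg d E k)"
      using less.hyps[OF m'(4) m'(1-3) less.prems(4)] .
    have B: "(mono m - mono m' :: 'k mpoly) \<in> pv.span (K_G d E \<inter> RG_deg d E k)"
      using m'(5) pv.span_base by blast
    have "(mono m - mono m') + (mono m' - mono (cU k U)) \<in> (pv.span (K_G d E \<inter> RG_deg d E k) :: 'k mpoly set)"
      by (rule pv.span_add[OF B A])
    then show ?thesis by simp
  qed
qed


lemma lookup_le_deg: "Poly_Mapping.lookup m S \<le> monom_deg m"
proof (cases "S \<in> Poly_Mapping.keys m")
  case True
  then show ?thesis unfolding monom_deg_def by (rule member_le_sum[of S _ "Poly_Mapping.lookup m"]) auto
qed (simp add: in_keys_iff)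

lemma finite_Mk: "finite {m :: monom. Poly_Mapping.keys m \<subseteq> stable_sets d E \<and> monom_deg m = k}"
  (is "finite ?M")
proof -
  have "Poly_Mapping.lookup ` ?M \<subseteq> {f. \<forall>x. (x \<in> stable_sets d E \<longrightarrow> f x \<in> {0..k}) \<and> (x \<notin> stable_sets d E \<longrightarrow> f x = 0)}"
  proof (rule image_subsetI)
    fix m assume m: "m \<in> ?M"
    show "Poly_Mapping.lookup m \<in> {f. \<forall>x. (x \<in> stable_sets d E \<longrightarrow> f x \<in> {0..k}) \<and> (x \<notin> stable_sets d E \<longrightarrow> f x = 0)}"
    proof (rule CollectI, intro allI conjI impI)
      fix x assume "x \<in> stable_sets d E"
      show "Poly_Mapping.lookup m x \<in> {0..k}" using lookup_le_deg[of m x] m by simp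
    next
      fix x assume "x \<notin> stable_sets d E"
      then have "x \<notin> Poly_Mapping.keys m" using m by blast
      then show "Poly_Mapping.lookup m x = 0" by (simp add: in_keys_iff)
    qed
  qed
  then have "finite (Poly_Mapping.lookup ` ?M)"
    by (rule finite_subset) (rule finite_set_of_finite_funs[OF st_finite finite_atLeastAtMost])
  moreover have "inj_on Poly_Mapping.lookup ?M"
    by (rule inj_onI) (metis lookup_inject)
  ultimately show ?thesis by (rule finite_imageD)
qed

lemma pscale_mono: "pscale c (mono m) = Poly_Mapping.single m c"
  unfolding pscale_def mono_def by simp

lemma RG_deg_span: "RG_deg d E k \<subseteq> pv.span (mono ` {m :: monom. Poly_Mapping.keys m \<subseteq> stable_sets d E \<and> monom_deg m = k} :: 'k::field mpoly set)"
proof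
  fix p :: "'k mpoly" assume p: "p \<in> RG_deg d E k"
  have "p = (\<Sum>m\<in>Poly_Mapping.keys p. pscale (Poly_Mapping.lookup p m) (mono m))"
    unfolding pscale_mono by (rule poly_expand)
  also have "\<dots> \<in> pv.span (mono ` {m :: monom. Poly_Mapping.keys m \<subseteq> stable_sets d E \<and> monom_deg m = k})"
    using p by (intro pv.span_sum pv.span_scale pv.span_base) (auto simp: RG_deg_def RG_def)
  finally show "p \<in> pv.span (mono ` {m :: monom. Poly_Mapping.keys m \<subseteq> stable_sets d E \<and> monom_deg m = k})" .
qed

lemma mono_RG_deg: "Poly_Mapping.keys m \<subseteq> stable_sets d E \<Longrightarrow> monom_deg m = k \<Longrightarrow> (mono m :: 'k::field mpoly) \<in> RG_deg d E k"
  by (rule RG_deg_I) simp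

lemma split2:
  fixes m :: monom
  assumes "Poly_Mapping.lookup m S \<ge> 1" "Poly_Mapping.lookup m T \<ge> 1" "S = T \<Longrightarrow> Poly_Mapping.lookup m S \<ge> 2"
  shows "m = (m - Poly_Mapping.single S 1 - Poly_Mapping.single T 1) + (Poly_Mapping.single S 1 + Poly_Mapping.single T 1)"
proof (rule poly_mapping_eqI)
  fix X
  show "Poly_Mapping.lookup m X = Poly_Mapping.lookup (m - Poly_Mapping.single S 1 - Poly_Mapping.single T 1 + (Poly_Mapping.single S 1 + Poly_Mapping.single T 1)) X"
    using assms by (cases "X = S"; cases "X = T") (auto simp: lookup_add lookup_minus lookup_single when_def)
qed

lemma overlap_in_K:
  assumes st: "Poly_Mapping.keys m \<subseteq> stable_sets d E" and wi: "w m i \<ge> 2"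
  shows "(mono m :: 'k::field mpoly) \<in> K_G d E"
proof -
  have "\<exists>S T. S \<in> Poly_Mapping.keys m \<and> T \<in> Poly_Mapping.keys m \<and> i \<in> S \<and> i \<in> T \<and> (S = T \<longrightarrow> Poly_Mapping.lookup m S \<ge> 2)"
  proof (rule ccontr)
    assume na: "\<not> ?thesis"
    let ?K = "{S \<in> Poly_Mapping.keys m. i \<in> S}"
    have "w m i = (\<Sum>S\<in>Poly_Mapping.keys m. if i \<in> S then Poly_Mapping.lookup m S else 0)"
      unfolding w_def L_def by (rule sum.cong) auto
    also have "\<dots> = (\<Sum>S\<in>?K. Poly_Mapping.lookup m S)"
      by (simp add: sum.inter_filter)
    also have "\<dots> \<le> 1"
    proof (cases "?K = {}")
      case True
      show ?thesis by (simp only: True) simp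
    next
      case False
      then obtain S where S: "S \<in> ?K" by blast
      have TS: "T = S" if T: "T \<in> ?K" for T
      proof (rule ccontr)
        assume "T \<noteq> S"
        then have "S \<in> Poly_Mapping.keys m \<and> T \<in> Poly_Mapping.keys m \<and> i \<in> S \<and> i \<in> T \<and> (S = T \<longrightarrow> Poly_Mapping.lookup m S \<ge> 2)"
          using S T by simp
        then have "\<exists>S T. S \<in> Poly_Mapping.keys m \<and> T \<in> Poly_Mapping.keys m \<and> i \<in> S \<and> i \<in> T \<and> (S = T \<longrightarrow> Poly_Mapping.lookup m S \<ge> 2)"
          by (intro exI)
        with na show False by (rule notE)
      qed
      have KS: "?K = {S}"
      proof
        show "?K \<subseteq> {S}" using TS by (intro subsetI) simp
        show "{S} \<subseteq> ?K" using S by simp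
      qed
      have "\<not> (2 \<le> Poly_Mapping.lookup m S)"
      proof
        assume "2 \<le> Poly_Mapping.lookup m S"
        then have "S \<in> Poly_Mapping.keys m \<and> S \<in> Poly_Mapping.keys m \<and> i \<in> S \<and> i \<in> S \<and> (S = S \<longrightarrow> Poly_Mapping.lookup m S \<ge> 2)"
          using S by simp
        then have "\<exists>S T. S \<in> Poly_Mapping.keys m \<and> T \<in> Poly_Mapping.keys m \<and> i \<in> S \<and> i \<in> T \<and> (S = T \<longrightarrow> Poly_Mapping.lookup m S \<ge> 2)"
          by (intro exI)
        with na show False by (rule notE)
      qed
      then show ?thesis by (simp only: KS) simp
    qed
    finally show False using wi by simp
  qed
  then obtain S T where S: "S \<in> Poly_Mapping.keys m" and T: "T \<in> Poly_Mapping.keys m" and i: "i \<in> S" "i \<in> T"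
    and ST: "S = T \<longrightarrow> Poly_Mapping.lookup m S \<ge> 2" by blast
  define a where "a = m - Poly_Mapping.single S 1 - Poly_Mapping.single T 1"
  have ma: "m = a + (Poly_Mapping.single S 1 + Poly_Mapping.single T 1)"
    unfolding a_def by (rule split2) (use S T ST in \<open>auto simp: in_keys_iff\<close>)
  have keysa: "Poly_Mapping.keys a \<subseteq> Poly_Mapping.keys m"
    unfolding a_def by (auto simp: in_keys_iff lookup_minus)
  define g :: "'k mpoly" where "g = var S * var T"
  have gM: "g \<in> M_gens d E"
    unfolding g_def M_gens_def using S T st i by blast
  have aRG: "(mono a :: 'k mpoly) \<in> RG d E"
    unfolding RG_def using keysa st by simp
  have eq: "(mono m :: 'k mpoly) = mono a * g"
    unfolding g_def var_mult mono_add by (subst ma) simp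
  show ?thesis unfolding eq K_G_def ideal_gen_in_def
    by (rule CollectI, rule exI[of _ "{g}"], rule exI[of _ "\<lambda>_. mono a"]) (use gM aRG in auto)
qed

theorem proposition6p11:
  fixes d :: nat and E :: "nat set set"
  assumes "simple_graph d E"
  shows "\<exists>k0. \<forall>k\<ge>k0. hilbert_fn TYPE('k::field) d E k = 2 ^ d"
proof (intro exI allI impI)
  fix k assume dk: "d \<le> k"
  note G = assms
  define V where "V = (RG_deg d E k :: 'k mpoly set)"
  define W where "W = K_G d E \<inter> V"
  define Mk where "Mk = {m :: monom. Poly_Mapping.keys m \<subseteq> stable_sets d E \<and> monom_deg m = k}"
  define g where "g U = (mono (cU k U) :: 'k mpoly)" for U
  define C where "C = g ` Pow {1..d}"
  have finMk: "finite Mk" unfolding Mk_def by (rule finite_Mk)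
  have Vspan: "V \<subseteq> pv.span (mono ` Mk)" unfolding V_def Mk_def by (rule RG_deg_span)
  have finU: "finite U" if "U \<subseteq> {1..d}" for U using that finite_subset by blast
  have cardU: "card U \<le> d" if "U \<subseteq> {1..d}" for U using card_mono[OF _ that] by simp
  have gV: "g U \<in> V" if "U \<subseteq> {1..d}" for U
    unfolding g_def V_def using keys_cU[OF G that] deg_cU[OF finU[OF that]] cardU[OF that] dk
    by (intro mono_RG_deg) auto
  have phiC: "phi U (g U') = (if U = U' then 1 else 0)" if "U \<subseteq> {1..d}" "U' \<subseteq> {1..d}" for U U'
  proof -
    have "(ind U' = ind U) = (U = U')" by (auto simp: ind_def fun_eq_iff split: if_splits)
    then show ?thesis unfolding g_def mono_def phi_single w_cU[OF finU[OF that(2)]] by simp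
  qed
  have phiW: "phi U x = 0" if "x \<in> W" for U x using that phi_K unfolding W_def by blast
  obtain BW where BW: "BW \<subseteq> W" "pv.independent BW" "W \<subseteq> pv.span BW" "card BW = pv.dim W"
    using pv.basis_exists[of W] by blast
  have "W \<subseteq> pv.span (mono ` Mk)" using Vspan unfolding W_def by blast
  then have finBW: "finite BW"
    using pv.independent_span_bound[of "mono ` Mk" BW] finMk BW(1,2) pv.span_superset by blast
  have indep: "pv.independent (BW \<union> g ` F)" if "finite F" "F \<subseteq> Pow {1..d}" for F
    using that
  proof (induction F rule: finite_induct)
    case empty then show ?case using BW(2) by simp
  next
    case (insert U F)
    have U: "U \<subseteq> {1..d}" using insert.prems by blast
    have "\<forall>x\<in>BW \<union> g ` F. phi U x = 0"
    proof
      fix x assume "x \<in> BW \<union> g ` F"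
      then show "phi U x = 0"
      proof
        assume "x \<in> BW" then have "x \<in> W" using BW(1) by blast
        then show ?thesis by (rule phiW)
      next
        assume "x \<in> g ` F"
        then obtain U' where U': "U' \<in> F" "x = g U'" by blast
        have U'd: "U' \<subseteq> {1..d}" using insert.prems U'(1) by blast
        have ne: "U \<noteq> U'" using insert.hyps(2) U'(1) by blast
        show ?thesis using phiC[OF U U'd] ne U'(2) by simp
      qed
    qed
    note z = phi_span_zero[OF this]
    have one: "phi U (g U) = 1" using phiC[OF U U] by simp
    have "g U \<notin> pv.span (BW \<union> g ` F)"
    proof
      assume "g U \<in> pv.span (BW \<union> g ` F)"
      from z[OF this] one show False by simp
    qed
    then have "pv.independent (insert (g U) (BW \<union> g ` F))"
      using insert.IH insert.prems by (intro pv.independent_insertI) auto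
    then show ?case by simp
  qed
  have indepC: "pv.independent (BW \<union> C)" unfolding C_def by (rule indep) auto
  have disj: "BW \<inter> C = {}"
  proof (rule ccontr)
    assume "BW \<inter> C \<noteq> {}"
    then obtain U where U: "U \<subseteq> {1..d}" "g U \<in> BW" unfolding C_def by blast
    then have "phi U (g U) = 0" using BW(1) phiW by blast
    with phiC[OF U(1) U(1)] show False by simp
  qed
  have inj: "inj_on g (Pow {1..d})"
  proof (rule inj_onI)
    fix U U' assume U: "U \<in> Pow {1..d}" "U' \<in> Pow {1..d}" "g U = g U'"
    have a: "phi U (g U) = 1" using phiC[of U U] U(1) by simp
    have b: "phi U (g U') = (if U = U' then 1 else 0)" using phiC[of U U'] U(1,2) by simp
    show "U = U'"
    proof (rule ccontr)
      assume "U \<noteq> U'"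
      with a b U(3) show False by simp
    qed
  qed
  have cardC: "card C = 2 ^ d" unfolding C_def using card_image[OF inj] by (simp add: card_Pow)
  have BWV: "BW \<subseteq> V" using BW(1) unfolding W_def by blast
  have CV: "C \<subseteq> V" unfolding C_def using gV by blast
  have spW: "pv.span W \<subseteq> pv.span BW"
  proof -
    have "pv.span W \<subseteq> pv.span (pv.span BW)" by (rule pv.span_mono[OF BW(3)])
    then show ?thesis by (simp only: pv.span_span)
  qed
  have monsp: "(mono ` Mk :: 'k mpoly set) \<subseteq> pv.span (BW \<union> C)"
  proof
    fix x :: "'k mpoly" assume "x \<in> mono ` Mk"
    then obtain m where m: "m \<in> Mk" "x = mono m" by blast
    have mst: "Poly_Mapping.keys m \<subseteq> stable_sets d E" and mdeg: "monom_deg m = k"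
      using m(1) unfolding Mk_def by auto
    have mV: "(mono m :: 'k mpoly) \<in> V" unfolding V_def using mono_RG_deg[OF mst mdeg] .
    show "x \<in> pv.span (BW \<union> C)"
    proof (cases "\<exists>i. w m i \<ge> 2")
      case True
      then obtain i where "w m i \<ge> 2" by blast
      then have "(mono m :: 'k mpoly) \<in> W" unfolding W_def using overlap_in_K[OF mst] mV by blast
      then have "(mono m :: 'k mpoly) \<in> pv.span BW" using BW(3) by blast
      then show ?thesis using m(2) pv.span_mono[of BW "BW \<union> C"] by blast
    next
      case False
      define U where "U = {i. w m i = 1}"
      have wm: "w m = ind U"
      proof
        fix i
        have "w m i < 2" using False by (simp add: not_le)
        then show "w m i = ind U i" unfolding U_def ind_def by auto
      qed
      have U: "U \<subseteq> {1..d}"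
      proof
        fix i assume "i \<in> U"
        then have "w m i \<noteq> 0" unfolding U_def by simp
        then obtain S where S: "S \<in> Poly_Mapping.keys m" "Poly_Mapping.lookup m S * (if i \<in> S then 1 else 0) \<noteq> 0"
          unfolding w_def L_def using sum.not_neutral_contains_not_neutral by blast
        then have "i \<in> S" by (simp split: if_splits)
        with S(1) have "S \<in> Poly_Mapping.keys m" "i \<in> S" by auto
        then show "i \<in> {1..d}" using mst st_sub by blast
      qed
      have "mono m - g U \<in> pv.span W"
        unfolding g_def W_def V_def using reduce[OF G dk mst mdeg wm U] .
      then have A: "mono m - g U \<in> pv.span (BW \<union> C)"
        using spW pv.span_mono[of BW "BW \<union> C"] by blast
      have B: "g U \<in> pv.span (BW \<union> C)"
        using U unfolding C_def by (intro pv.span_base) blast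
      have "(mono m - g U) + g U \<in> pv.span (BW \<union> C)" by (rule pv.span_add[OF A B])
      then show ?thesis using m(2) by simp
    qed
  qed
  have "pv.span V \<subseteq> pv.span (BW \<union> C)"
  proof -
    have "pv.span (mono ` Mk) \<subseteq> pv.span (pv.span (BW \<union> C))" by (rule pv.span_mono[OF monsp])
    then have "pv.span (mono ` Mk) \<subseteq> pv.span (BW \<union> C)" by (simp only: pv.span_span)
    then have "V \<subseteq> pv.span (BW \<union> C)" using Vspan by (rule subset_trans[rotated])
    then show ?thesis by (rule pv.span_minimal[OF _ pv.subspace_span])
  qed
  moreover have "pv.span (BW \<union> C) \<subseteq> pv.span V"
    by (rule pv.span_mono[OF Un_least[OF BWV CV]])
  ultimately have "pv.span (BW \<union> C) = pv.span V" by blast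
  then have "pv.dim V = card (BW \<union> C)" by (rule pv.dim_eq_card[OF _ indepC])
  also have "\<dots> = card BW + card C"
    by (rule card_Un_disjoint[OF finBW _ disj]) (simp add: C_def)
  also have "\<dots> = card BW + 2 ^ d" by (simp only: cardC)
  finally have "pv.dim V = pv.dim W + 2 ^ d" using BW(4) by simp
  moreover have "hilbert_fn TYPE('k) d E k = pv.dim V - pv.dim W"
    unfolding hilbert_fn_def V_def W_def by (rule refl)
  ultimately show "hilbert_fn TYPE('k) d E k = 2 ^ d" by linarith
qed

end
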